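(* For integers $k,m\ge0$, $L_k\le L_m$ in the homomorphism order if and only if $k\ge m$. Moreover, every oriented path of height exactly $3$ is homomorphically equivalent to $L_k$ for some $k\ge0$, and consequently the oriented paths of height at most $3$, up to homomorphic equivalence, form the chain $$\vec P_0<\vec P_1<\vec P_2<\cdots<L_{k+1}<L_k<\cdots<L_1<L_0=\vec P_3,$$ with no oriented path strictly between $\vec P_0$ and $\vec P_1$, nor strictly between $\vec P_1$ and $\vec P_2$.
   Context: A homomorphism between digraphs is a vertex map sending arcs to arcs; $G_1\le G_2$ means one exists, $G_1<G_2$ means $G_1\le G_2$ and $G_2\not\le G_1$. An oriented path is a digraph whose vertices can be listed $p_0,\dots,p_n$ so that its arcs are exactly one arc between $p_{i-1}$ and $p_i$ (in either direction) for each $i$. $\vec P_n$ is the directed path with vertices $0,1,\dots,n$ and arcs $01,12,\dots,(n-1)n$. The height of an oriented path $P$ is the minimum $k\ge0$ with $P\to\vec P_k$. For $k\ge0$, $L_k$ is the oriented path with vertex sequence $(a,b_0,c_0,b_1,c_1,\dots,b_k,c_k,d)$ and arcs $ab_0,\ b_0c_0,\ b_1c_0,\ b_1c_1,\ b_2c_1,\ b_2c_2,\dots,b_kc_{k-1},\ b_kc_k,\ c_kd$ (each $xy$ denotes an arc from $x$ to $y$). *)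

theory Defs
  imports Main
begin

type_synonym 'a digraph = "'a set \<times> ('a \<times> 'a) set"

definition verts :: "'a digraph \<Rightarrow> 'a set" where "verts G = fst G"
definition arcs :: "'a digraph \<Rightarrow> ('a \<times> 'a) set" where "arcs G = snd G"

definition hom_le :: "'a digraph \<Rightarrow> 'b digraph \<Rightarrow> bool" where
  "hom_le G H \<longleftrightarrow> (\<exists>f. (\<forall>x\<in>verts G. f x \<in> verts H) \<and>
                        (\<forall>(x,y)\<in>arcs G. (f x, f y) \<in> arcs H))"

definition hom_lt :: "'a digraph \<Rightarrow> 'b digraph \<Rightarrow> bool" where
  "hom_lt G H \<longleftrightarrow> hom_le G H \<and> \<not> hom_le H G"

definition hom_equiv :: "'a digraph \<Rightarrow> 'b digraph \<Rightarrow> bool" where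
  "hom_equiv G H \<longleftrightarrow> hom_le G H \<and> hom_le H G"

definition oriented_path :: "'a digraph \<Rightarrow> bool" where
  "oriented_path G \<longleftrightarrow> (\<exists>ps. ps \<noteq> [] \<and> distinct ps \<and> set ps = verts G \<and>
     (\<forall>i. Suc i < length ps \<longrightarrow>
        ((ps!i, ps!Suc i) \<in> arcs G) \<noteq> ((ps!Suc i, ps!i) \<in> arcs G)) \<and>
     arcs G \<subseteq> {e. \<exists>i. Suc i < length ps \<and>
        (e = (ps!i, ps!Suc i) \<or> e = (ps!Suc i, ps!i))})"

definition dipath :: "nat \<Rightarrow> nat digraph" where
  "dipath n = ({0..n}, {(i, Suc i) | i. i < n})"

definition height :: "'a digraph \<Rightarrow> nat" where
  "height G = (LEAST k. hom_le G (dipath k))"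

datatype Lvert = La | Lb nat | Lc nat | Ld

definition Lpath :: "nat \<Rightarrow> Lvert digraph" where
  "Lpath k = ({La, Ld} \<union> Lb ` {0..k} \<union> Lc ` {0..k},
              {(La, Lb 0), (Lc k, Ld)} \<union> {(Lb i, Lc i) | i. i \<le> k}
              \<union> {(Lb (Suc i), Lc i) | i. i < k})"

end

theory Submission
  imports Defs
begin


definition Zg :: "nat \<Rightarrow> (nat \<Rightarrow> bool) \<Rightarrow> nat digraph" where
  "Zg n dir = ({0..n}, {(i, Suc i) | i. i < n \<and> dir i} \<union> {(Suc i, i) | i. i < n \<and> \<not> dir i})"

definition isH :: "nat \<Rightarrow> (nat \<Rightarrow> bool) \<Rightarrow> (nat \<Rightarrow> nat) \<Rightarrow> nat \<Rightarrow> bool" where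
  "isH n dir f N \<longleftrightarrow> (\<forall>i\<le>n. f i \<le> N) \<and>
     (\<forall>i<n. if dir i then f (Suc i) = Suc (f i) else f i = Suc (f (Suc i)))"

definition adj :: "nat \<Rightarrow> nat \<Rightarrow> bool" where "adj a b \<longleftrightarrow> b = Suc a \<or> a = Suc b"
definition btw :: "nat \<Rightarrow> nat \<Rightarrow> nat \<Rightarrow> bool" where "btw a b u \<longleftrightarrow> min a b < u \<and> u < max a b"
definition dd :: "nat \<Rightarrow> nat \<Rightarrow> nat" where "dd a b = (a - b) + (b - a)"

definition dirL :: "nat \<Rightarrow> nat \<Rightarrow> bool" where "dirL k i \<longleftrightarrow> i = 0 \<or> odd i \<or> i = 2*k+2"
definition LZ :: "nat \<Rightarrow> nat digraph" where "LZ k = Zg (2*k+3) (dirL k)"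
definition lev :: "nat \<Rightarrow> nat \<Rightarrow> nat" where
  "lev k p = (if p = 0 then 0 else if 2*k+3 \<le> p then 3 else if odd p then 1 else 2)"

lemma homI: assumes "\<And>x. x \<in> verts G \<Longrightarrow> f x \<in> verts H" "\<And>x y. (x,y) \<in> arcs G \<Longrightarrow> (f x, f y) \<in> arcs H" shows "hom_le G H"
  unfolding hom_le_def using assms by blast

lemma hom_trans: "hom_le A B \<Longrightarrow> hom_le B C \<Longrightarrow> hom_le A C"
  unfolding hom_le_def apply (elim exE) subgoal for f g apply (rule exI[of _ "g o f"]) by fastforce done

lemma equiv_trans: "hom_equiv A B \<Longrightarrow> hom_equiv B C \<Longrightarrow> hom_equiv A C"
  unfolding hom_equiv_def using hom_trans[of A B C] hom_trans[of C B A] by blast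

lemma equiv_sym: "hom_equiv A B \<Longrightarrow> hom_equiv B A"
  unfolding hom_equiv_def by blast

lemma verts_Zg[simp]: "verts (Zg n dir) = {0..n}" by (simp add: Zg_def verts_def)
lemma arcs_Zg: "arcs (Zg n dir) = {(i, Suc i) | i. i < n \<and> dir i} \<union> {(Suc i, i) | i. i < n \<and> \<not> dir i}"
  by (simp add: Zg_def arcs_def)

lemma hom_Zg_iff: "hom_le (Zg n dir) H \<longleftrightarrow> (\<exists>h. (\<forall>i\<le>n. h i \<in> verts H) \<and>
   (\<forall>i<n. (dir i \<longrightarrow> (h i, h (Suc i)) \<in> arcs H) \<and> (\<not> dir i \<longrightarrow> (h (Suc i), h i) \<in> arcs H)))"
proof
  assume "hom_le (Zg n dir) H"
  then obtain h where h1: "\<forall>x\<in>verts (Zg n dir). h x \<in> verts H"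
    and h2: "\<forall>(x,y)\<in>arcs (Zg n dir). (h x, h y) \<in> arcs H" unfolding hom_le_def by blast
  show "\<exists>h. (\<forall>i\<le>n. h i \<in> verts H) \<and>
   (\<forall>i<n. (dir i \<longrightarrow> (h i, h (Suc i)) \<in> arcs H) \<and> (\<not> dir i \<longrightarrow> (h (Suc i), h i) \<in> arcs H))"
    apply (rule exI[of _ h]) using h1 h2 by (auto simp: arcs_Zg)
next
  assume "\<exists>h. (\<forall>i\<le>n. h i \<in> verts H) \<and>
   (\<forall>i<n. (dir i \<longrightarrow> (h i, h (Suc i)) \<in> arcs H) \<and> (\<not> dir i \<longrightarrow> (h (Suc i), h i) \<in> arcs H))"
  then obtain h where "\<forall>i\<le>n. h i \<in> verts H" "\<forall>i<n. (dir i \<longrightarrow> (h i, h (Suc i)) \<in> arcs H) \<and> (\<not> dir i \<longrightarrow> (h (Suc i), h i) \<in> arcs H)" by blast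
  then show "hom_le (Zg n dir) H"
    by (intro homI[of _ h]) (auto simp: arcs_Zg)
qed

lemma dipath_Zg: "dipath N = Zg N (\<lambda>_. True)"
  by (simp add: dipath_def Zg_def)

lemma verts_dipath[simp]: "verts (dipath N) = {0..N}" by (simp add: dipath_def verts_def)
lemma arcs_dipath[simp]: "(x,y) \<in> arcs (dipath N) \<longleftrightarrow> y = Suc x \<and> x < N" by (auto simp: dipath_def arcs_def)

lemma hom_dipath_iff: "hom_le (Zg n dir) (dipath N) \<longleftrightarrow> (\<exists>f. isH n dir f N)"
proof
  assume "hom_le (Zg n dir) (dipath N)"
  then obtain h where h: "\<forall>i\<le>n. h i \<in> {0..N}" "\<forall>i<n. (dir i \<longrightarrow> h (Suc i) = Suc (h i) \<and> h i < N) \<and> (\<not> dir i \<longrightarrow> h i = Suc (h (Suc i)) \<and> h (Suc i) < N)"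
    unfolding hom_Zg_iff by auto
  then have "isH n dir h N" unfolding isH_def by auto
  thus "\<exists>f. isH n dir f N" by blast
next
  assume "\<exists>f. isH n dir f N"
  then obtain h where h: "isH n dir h N" ..
  have "(\<forall>i\<le>n. h i \<in> verts (dipath N)) \<and>
   (\<forall>i<n. (dir i \<longrightarrow> (h i, h (Suc i)) \<in> arcs (dipath N)) \<and> (\<not> dir i \<longrightarrow> (h (Suc i), h i) \<in> arcs (dipath N)))"
  proof (intro conjI allI impI)
    fix i assume "i \<le> n" then show "h i \<in> verts (dipath N)" using h unfolding isH_def by auto
  next
    fix i assume i: "i < n" "dir i"
    have "Suc i \<le> n" using i by simp
    then have "h (Suc i) \<le> N" using h unfolding isH_def by blast
    moreover have "h (Suc i) = Suc (h i)" using h i unfolding isH_def by auto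
    ultimately show "(h i, h (Suc i)) \<in> arcs (dipath N)" by simp
  next
    fix i assume i: "i < n" "\<not> dir i"
    have "i \<le> n" using i by simp
    then have "h i \<le> N" using h unfolding isH_def by blast
    moreover have "h i = Suc (h (Suc i))" using h i unfolding isH_def by auto
    ultimately show "(h (Suc i), h i) \<in> arcs (dipath N)" by simp
  qed
  then show "hom_le (Zg n dir) (dipath N)" unfolding hom_Zg_iff by blast
qed

lemma isH_step: "isH n dir f N \<Longrightarrow> i < n \<Longrightarrow> f (Suc i) = Suc (f i) \<or> f i = Suc (f (Suc i))"
  unfolding isH_def by metis

lemma isH_diff: assumes "isH n dir f N" "isH n dir g M" "i \<le> n"
  shows "int (f i) - int (g i) = int (f 0) - int (g 0)"
  using assms(3)
proof (induction i)
  case (Suc i)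
  then have "i < n" by simp
  have "if dir i then f (Suc i) = Suc (f i) else f i = Suc (f (Suc i))"
       "if dir i then g (Suc i) = Suc (g i) else g i = Suc (g (Suc i))"
    using assms(1,2) \<open>i < n\<close> unfolding isH_def by auto
  with Suc show ?case by (cases "dir i") auto
qed simp

lemma isH_adj_arc: assumes "isH n dir f N" "a \<le> n" "b \<le> n" "adj a b" "f b = Suc (f a)"
  shows "(a, b) \<in> arcs (Zg n dir)"
proof -
  have "b = Suc a \<or> a = Suc b" using assms(4) unfolding adj_def .
  then show ?thesis
  proof
  assume b: "b = Suc a"
  then have "a < n" using assms by simp
  then have "if dir a then f (Suc a) = Suc (f a) else f a = Suc (f (Suc a))" using assms(1) unfolding isH_def by auto
  then show ?thesis using b \<open>a < n\<close> assms(5) by (auto simp: arcs_Zg split: if_splits)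
next
  assume b: "a = Suc b"
  then have "b < n" using assms by simp
  then have "if dir b then f (Suc b) = Suc (f b) else f b = Suc (f (Suc b))" using assms(1) unfolding isH_def by auto
  then show ?thesis using b \<open>b < n\<close> assms(5) by (auto simp: arcs_Zg split: if_splits)
qed
qed



lemma lev_isH: "isH (2*k+3) (dirL k) (lev k) 3"
  unfolding isH_def lev_def dirL_def apply (intro conjI allI impI) apply simp
  apply (auto split: if_splits)
  subgoal for i by (subgoal_tac "i = 2*k+2") auto
  done

fun walk :: "(nat \<Rightarrow> bool) \<Rightarrow> nat \<Rightarrow> nat \<Rightarrow> nat" where
  "walk dir n 0 = n"
| "walk dir n (Suc i) = (if dir i then Suc (walk dir n i) else walk dir n i - 1)"

lemma walk_bounds: "i \<le> n \<Longrightarrow> n - i \<le> walk dir n i \<and> walk dir n i \<le> n + i"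
  by (induction i) auto

lemma Zg_exists_dipath: "\<exists>N. hom_le (Zg n dir) (dipath N)"
proof -
  have "isH n dir (walk dir n) (2*n)"
    unfolding isH_def
  proof (intro conjI allI impI)
    fix i assume "i \<le> n" then show "walk dir n i \<le> 2*n" using walk_bounds[of i n dir] by simp
  next
    fix i assume i: "i < n"
    then have "n - i \<le> walk dir n i" using walk_bounds[of i n dir] by simp
    then show "if dir i then walk dir n (Suc i) = Suc (walk dir n i) else walk dir n i = Suc (walk dir n (Suc i))"
      using i by auto
  qed
  then show ?thesis unfolding hom_dipath_iff by blast
qed

lemma isH_id: "isH a (\<lambda>_. True) id a"
  unfolding isH_def by auto

lemma dipath_le_iff: "hom_le (dipath a) (dipath b) \<longleftrightarrow> a \<le> b"
proof
  assume "hom_le (dipath a) (dipath b)"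
  then obtain f where f: "isH a (\<lambda>_. True) f b" unfolding dipath_Zg[of a] hom_dipath_iff by blast
  have "int (f a) - int (id a) = int (f 0) - int (id 0)" using isH_diff[OF f isH_id, of a] by simp
  moreover have "f a \<le> b" using f unfolding isH_def by simp
  ultimately show "a \<le> b" by simp
next
  assume "a \<le> b"
  then have "isH a (\<lambda>_. True) id b" unfolding isH_def by auto
  then show "hom_le (dipath a) (dipath b)" unfolding dipath_Zg[of a] hom_dipath_iff by blast
qed

lemma LZ_dipath_ge: "hom_le (LZ k) (dipath N) \<Longrightarrow> 3 \<le> N"
proof -
  assume "hom_le (LZ k) (dipath N)"
  then obtain f where f: "isH (2*k+3) (dirL k) f N" unfolding LZ_def hom_dipath_iff by blast
  have l3: "lev k (2*k+3) = 3" "lev k 0 = 0" by (simp_all add: lev_def)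
  have "int (f (2*k+3)) - int (lev k (2*k+3)) = int (f 0) - int (lev k 0)" using isH_diff[OF f lev_isH, of "2*k+3"] by simp
  then have "int (f (2*k+3)) = int (f 0) + 3" unfolding l3 by simp
  moreover have "f (2*k+3) \<le> N" using f unfolding isH_def by simp
  ultimately show "3 \<le> N" by linarith
qed

lemma LZ_dipath3: "hom_le (LZ k) (dipath 3)"
  unfolding LZ_def hom_dipath_iff using lev_isH by blast

lemma LZ_arc: "p \<le> 2*k+3 \<Longrightarrow> q \<le> 2*k+3 \<Longrightarrow> adj p q \<Longrightarrow> lev k q = Suc (lev k p) \<Longrightarrow> (p,q) \<in> arcs (LZ k)"
  unfolding LZ_def using isH_adj_arc[OF lev_isH] by blast

lemma Zg_arc_props: assumes "isH n dir f N" "(p,q) \<in> arcs (Zg n dir)"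
  shows "f q = Suc (f p) \<and> adj p q \<and> p \<le> n \<and> q \<le> n"
  using assms unfolding arcs_Zg isH_def adj_def by (auto split: if_splits)

lemma LZ_arc_lev: "(p,q) \<in> arcs (LZ k) \<Longrightarrow> lev k q = Suc (lev k p) \<and> adj p q \<and> p \<le> 2*k+3 \<and> q \<le> 2*k+3"
  unfolding LZ_def using Zg_arc_props[OF lev_isH] by blast

lemma verts_LZ[simp]: "verts (LZ k) = {0..2*k+3}" by (simp add: LZ_def)

lemma lev_0_iff: "lev k p = 0 \<longleftrightarrow> p = 0" by (simp add: lev_def)
lemma lev_3_iff: "lev k p = 3 \<longleftrightarrow> 2*k+3 \<le> p" by (simp add: lev_def)

lemma LZ_le_imp: assumes "hom_le (LZ k) (LZ m)" shows "m \<le> k"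
proof -
  obtain h where h1: "\<forall>i\<le>2*k+3. h i \<in> {0..2*m+3}"
    and h2: "\<forall>i<2*k+3. (dirL k i \<longrightarrow> (h i, h (Suc i)) \<in> arcs (LZ m)) \<and> (\<not> dirL k i \<longrightarrow> (h (Suc i), h i) \<in> arcs (LZ m))"
    using assms unfolding LZ_def[of k] hom_Zg_iff by auto
  have arcL: "i < 2*k+3 \<Longrightarrow> (if dirL k i then lev m (h (Suc i)) = Suc (lev m (h i)) else lev m (h i) = Suc (lev m (h (Suc i))))
     \<and> adj (h i) (h (Suc i))" for i
  proof (cases "dirL k i")
    case True
    assume i: "i < 2*k+3"
    then have "(h i, h (Suc i)) \<in> arcs (LZ m)" using h2 True by blast
    from LZ_arc_lev[OF this] show ?thesis using True by simp
  next
    case False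
    assume i: "i < 2*k+3"
    then have "(h (Suc i), h i) \<in> arcs (LZ m)" using h2 False by blast
    from LZ_arc_lev[OF this] show ?thesis using False by (auto simp: adj_def)
  qed
  have g: "isH (2*k+3) (dirL k) (\<lambda>i. lev m (h i)) 3"
    unfolding isH_def
  proof (intro conjI allI impI)
    fix i show "lev m (h i) \<le> 3" by (simp add: lev_def)
  next
    fix i assume "i < 2*k+3"
    then show "if dirL k i then lev m (h (Suc i)) = Suc (lev m (h i)) else lev m (h i) = Suc (lev m (h (Suc i)))"
      using arcL by blast
  qed
  have l3: "lev k (2*k+3) = 3" "lev k 0 = 0" by (simp_all add: lev_def)
  have "int (lev m (h (2*k+3))) - int (lev k (2*k+3)) = int (lev m (h 0)) - int (lev k 0)"
    using isH_diff[OF g lev_isH, of "2*k+3"] by simp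
  then have e: "int (lev m (h (2*k+3))) - 3 = int (lev m (h 0))" unfolding l3 by simp
  have "lev m (h (2*k+3)) \<le> 3" by (simp add: lev_def)
  with e have a: "lev m (h 0) = 0" and b: "lev m (h (2*k+3)) = 3" by linarith+
  have h0: "h 0 = 0" using a lev_0_iff by blast
  have hb: "2*m+3 \<le> h (2*k+3)" using b lev_3_iff by blast
  have "i \<le> 2*k+3 \<Longrightarrow> h i \<le> i" for i
  proof (induction i)
    case (Suc i)
    then have "h i \<le> i" "adj (h i) (h (Suc i))" using arcL by auto
    then show ?case unfolding adj_def by auto
  qed (simp add: h0)
  from this[of "2*k+3"] hb show "m \<le> k" by simp
qed

lemma LZ_le_if: assumes "m \<le> k" shows "hom_le (LZ k) (LZ m)"
proof -
  define h where "h p = (if 2*k+3 \<le> p then 2*m+3 else if p \<le> 2*m+2 then p else if even p then 2*m+2 else 2*m+1)" for p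
  have hl: "p \<le> 2*k+3 \<Longrightarrow> lev m (h p) = lev k p" for p
    using assms unfolding h_def lev_def by (auto split: if_splits)
  have hb: "h p \<le> 2*m+3" for p unfolding h_def by auto
  have ha: "i < 2*k+3 \<Longrightarrow> adj (h i) (h (Suc i))" for i
    using assms unfolding h_def adj_def apply (auto split: if_splits)
     apply (subgoal_tac "i = 2*k+2", simp, simp)
    apply (subgoal_tac "i = 2*m+2", simp, simp)
    done
  show ?thesis unfolding LZ_def[of k] hom_Zg_iff
  proof (intro exI[of _ h] conjI allI impI)
    fix i assume "i \<le> 2*k+3" then show "h i \<in> verts (LZ m)" using hb by simp
  next
    fix i assume i: "i < 2*k+3" "dirL k i"
    then have "lev k (Suc i) = Suc (lev k i)" using lev_isH[of k] unfolding isH_def by auto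
    then show "(h i, h (Suc i)) \<in> arcs (LZ m)"
      using LZ_arc[OF hb hb ha[OF i(1)]] hl i(1) by simp
  next
    fix i assume i: "i < 2*k+3" "\<not> dirL k i"
    then have "lev k i = Suc (lev k (Suc i))" using lev_isH[of k] unfolding isH_def by auto
    moreover have "adj (h (Suc i)) (h i)" using ha[OF i(1)] unfolding adj_def by auto
    ultimately show "(h (Suc i), h i) \<in> arcs (LZ m)"
      using LZ_arc[OF hb hb] hl i(1) by simp
  qed
qed



lemma LZ_le_iff: "hom_le (LZ k) (LZ m) \<longleftrightarrow> m \<le> k"
  using LZ_le_imp LZ_le_if by blast

lemma dipath2_LZ: "hom_le (dipath 2) (LZ k)"
  unfolding dipath_Zg hom_Zg_iff
proof (intro exI[of _ id] conjI allI impI)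
  fix i :: nat assume "i \<le> 2" then show "id i \<in> verts (LZ k)" by simp
next
  fix i :: nat assume "i < 2" "True"
  then show "(id i, id (Suc i)) \<in> arcs (LZ k)"
    by (intro LZ_arc) (auto simp: adj_def lev_def)
qed auto

lemma LZ0: "LZ 0 = dipath 3"
  unfolding LZ_def dipath_Zg Zg_def dirL_def
  apply auto
  subgoal for i by (cases i) (auto simp: less_Suc_eq numeral_3_eq_3)
  done



lemma isH_adj: assumes "isH n dir f N" "a \<le> n" "b \<le> n" "adj a b"
  shows "f b = Suc (f a) \<or> f a = Suc (f b)"
proof -
  have "b = Suc a \<or> a = Suc b" using assms(4) unfolding adj_def .
  then show ?thesis
  proof
    assume b: "b = Suc a" then have "a < n" using assms by simp
    then show ?thesis using isH_step[OF assms(1)] b by blast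
  next
    assume b: "a = Suc b" then have "b < n" using assms by simp
    then show ?thesis using isH_step[OF assms(1)] b by metis
  qed
qed

lemma seq3: fixes g :: "nat \<Rightarrow> nat"
  assumes g0: "g 0 = 0" and gL: "g L = 3"
    and st: "\<forall>p<L. g (Suc p) = Suc (g p) \<or> g p = Suc (g (Suc p))"
    and cl: "\<forall>p. 0 < p \<and> p < L \<longrightarrow> g p \<noteq> 0 \<and> g p \<noteq> 3"
    and bd: "\<forall>p\<le>L. g p \<le> 3"
  shows "\<exists>k. L = 2*k+3 \<and> (\<forall>p\<le>L. g p = lev k p)"
proof -
  have mid: "0 < p \<Longrightarrow> p < L \<Longrightarrow> g p = (if odd p then 1 else 2)" for p
  proof (induction p)
    case 0 then show ?case by simp
  next
    case (Suc p)
    have s: "g (Suc p) = Suc (g p) \<or> g p = Suc (g (Suc p))" using st Suc.prems by simp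
    have c: "g (Suc p) \<noteq> 0" "g (Suc p) \<noteq> 3" "g (Suc p) \<le> 3" using cl bd Suc.prems by auto
    show ?case
    proof (cases "p = 0")
      case True then show ?thesis using s c g0 by auto
    next
      case False
      then have "g p = (if odd p then 1 else 2)" using Suc by simp
      then show ?thesis using s c by (cases "odd p") auto
    qed
  qed
  have L0: "L \<noteq> 0"
  proof
    assume "L = 0" with g0 gL show False by simp
  qed
  have g1: "L \<noteq> 1"
  proof
    assume "L = 1"
    then have "g 1 = Suc (g 0) \<or> g 0 = Suc (g 1)" using st by auto
    then show False using g0 gL \<open>L = 1\<close> by auto
  qed
  have Lm: "g (L - 1) = (if odd (L - 1) then 1 else 2)" using mid[of "L-1"] L0 g1 by simp
  have "g L = Suc (g (L-1)) \<or> g (L-1) = Suc (g L)" using st[rule_format, of "L-1"] L0 by simp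
  then have "g (L-1) = 2" using gL Lm by (auto split: if_splits)
  then have ev: "even (L - 1)" using Lm by (auto split: if_splits)
  then obtain q where q: "L - 1 = 2*q" by blast
  then have "q \<ge> 1" using L0 g1 by simp
  then obtain k where k: "q = Suc k" by (cases q) auto
  have Lk: "L = 2*k+3" using q k L0 by simp
  show ?thesis
  proof (intro exI[of _ k] conjI allI impI)
    show "L = 2*k+3" by (rule Lk)
  next
    fix p assume p: "p \<le> L"
    show "g p = lev k p"
    proof (cases "p = 0")
      case True then show ?thesis using g0 by (simp add: lev_def)
    next
      case False
      show ?thesis
      proof (cases "p = L")
        case True then show ?thesis using gL Lk by (simp add: lev_def)
      next
        case False
        then have "p < L" using p by simp
        then show ?thesis using mid[of p] \<open>p \<noteq> 0\<close> Lk by (simp add: lev_def)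
      qed
    qed
  qed
qed

lemma seg3:
  assumes fH: "isH n dir f 3" and s: "s \<le> n" and j: "j \<le> n" and fs: "f s = 0" and fj: "f j = 3"
    and clean: "\<forall>u. btw s j u \<longrightarrow> f u \<noteq> 0 \<and> f u \<noteq> 3"
  shows "\<exists>k. dd s j = 2*k+3 \<and> hom_le (LZ k) (Zg n dir)"
proof -
  define sg where "sg p = (if s \<le> j then s + p else s - p)" for p
  define L where "L = dd s j"
  have sg0: "sg 0 = s" unfolding sg_def by simp
  have sgL: "sg L = j" unfolding sg_def L_def dd_def by simp
  have sgle: "p \<le> L \<Longrightarrow> sg p \<le> n" for p using s j unfolding sg_def L_def dd_def by auto
  have sgadj: "p < L \<Longrightarrow> adj (sg p) (sg (Suc p))" for p unfolding sg_def L_def dd_def adj_def by auto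
  have sgbtw: "0 < p \<Longrightarrow> p < L \<Longrightarrow> btw s j (sg p)" for p unfolding sg_def L_def dd_def btw_def by auto
  define g where "g p = f (sg p)" for p
  have "\<exists>k. L = 2*k+3 \<and> (\<forall>p\<le>L. g p = lev k p)"
  proof (rule seq3)
    show "g 0 = 0" unfolding g_def sg0 by (rule fs)
    show "g L = 3" unfolding g_def sgL by (rule fj)
    show "\<forall>p<L. g (Suc p) = Suc (g p) \<or> g p = Suc (g (Suc p))"
      using isH_adj[OF fH sgle sgle sgadj] unfolding g_def by simp
    show "\<forall>p. 0 < p \<and> p < L \<longrightarrow> g p \<noteq> 0 \<and> g p \<noteq> 3"
      using clean sgbtw unfolding g_def by blast
    show "\<forall>p\<le>L. g p \<le> 3" using fH sgle unfolding g_def isH_def by blast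
  qed
  then obtain k where Lk: "L = 2*k+3" and gl: "\<forall>p\<le>L. f (sg p) = lev k p" unfolding g_def by blast
  have "hom_le (LZ k) (Zg n dir)"
    unfolding LZ_def[of k] hom_Zg_iff
  proof (intro exI[of _ sg] conjI allI impI)
    fix i assume "i \<le> 2*k+3" then show "sg i \<in> verts (Zg n dir)" using sgle Lk by simp
  next
    fix i assume i: "i < 2*k+3" "dirL k i"
    then have "lev k (Suc i) = Suc (lev k i)" using lev_isH[of k] unfolding isH_def by auto
    then have "f (sg (Suc i)) = Suc (f (sg i))" using gl i Lk by simp
    then show "(sg i, sg (Suc i)) \<in> arcs (Zg n dir)"
      using isH_adj_arc[OF fH sgle sgle sgadj] i Lk by simp
  next
    fix i assume i: "i < 2*k+3" "\<not> dirL k i"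
    then have "lev k i = Suc (lev k (Suc i))" using lev_isH[of k] unfolding isH_def by auto
    then have "f (sg i) = Suc (f (sg (Suc i)))" using gl i Lk by simp
    moreover have "adj (sg (Suc i)) (sg i)" using sgadj[of i] i Lk unfolding adj_def by auto
    ultimately show "(sg (Suc i), sg i) \<in> arcs (Zg n dir)"
      using isH_adj_arc[OF fH sgle sgle] i Lk by simp
  qed
  then show ?thesis using Lk L_def by auto
qed



lemma g1: "adj x y \<Longrightarrow> s \<noteq> x \<Longrightarrow> s \<noteq> y \<Longrightarrow> btw y s x \<or> btw x s y"
  unfolding adj_def btw_def by auto
lemma g2: "adj x y \<Longrightarrow> btw x s y \<Longrightarrow> btw s x u \<Longrightarrow> u = y \<or> btw y s u"
  unfolding adj_def btw_def by auto
lemma g3: "adj x y \<Longrightarrow> btw x s y \<Longrightarrow> dd x s = Suc (dd y s)"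
  unfolding adj_def btw_def dd_def by auto
lemma g4: "adj x y \<Longrightarrow> s \<noteq> x \<Longrightarrow> s \<noteq> y \<Longrightarrow> btw y s u \<Longrightarrow> btw x s u \<or> u = x"
  unfolding adj_def btw_def by auto
lemma g5: "adj x y \<Longrightarrow> dd y s \<le> Suc (dd x s)"
  unfolding adj_def dd_def by auto
lemma g6: "adj x y \<Longrightarrow> \<not> btw y x u"
  unfolding adj_def btw_def by auto
lemma g7: "btw y s u \<Longrightarrow> btw y u v \<Longrightarrow> btw y s v"
  unfolding btw_def by auto
lemma g8: "btw y s u \<Longrightarrow> dd y u < dd y s"
  unfolding btw_def dd_def by auto
lemma g9: "btw y s u \<Longrightarrow> s \<le> n \<Longrightarrow> y \<le> n \<Longrightarrow> u \<le> n"
  unfolding btw_def by auto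
lemma btw_sym: "btw a b u = btw b a u"
  unfolding btw_def by auto
lemma dd_sym: "dd a b = dd b a"
  unfolding dd_def by auto
lemma adj_sym: "adj a b = adj b a"
  unfolding adj_def by auto
lemma adj_sub: "adj a b \<Longrightarrow> a \<le> M \<Longrightarrow> b \<le> M \<Longrightarrow> adj (M - a) (M - b)"
  unfolding adj_def by auto
lemma adj_of_close: "a \<le> Suc b \<Longrightarrow> b \<le> Suc a \<Longrightarrow> even a \<noteq> even b \<Longrightarrow> adj a b"
  unfolding adj_def
proof -
  assume "a \<le> Suc b" "b \<le> Suc a" "even a \<noteq> even b"
  moreover have "a \<noteq> b" using \<open>even a \<noteq> even b\<close> by auto
  ultimately show "b = Suc a \<or> a = Suc b" by auto
qed
lemma even_dd: "even (dd a b) = even (a + b)"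
proof (cases "a \<le> b")
  case True
  then obtain d where "b = a + d" using le_Suc_ex by blast
  then show ?thesis unfolding dd_def by auto
next
  case False
  then obtain d where "a = b + d" using le_Suc_ex[of b a] by auto
  then show ?thesis unfolding dd_def by auto
qed
lemma adj_dd1: "adj x y \<Longrightarrow> dd y x = 1"
  unfolding adj_def dd_def by auto

locale H3 =
  fixes n :: nat and dir :: "nat \<Rightarrow> bool" and f :: "nat \<Rightarrow> nat" and K :: nat
  assumes fH: "isH n dir f 3"
    and Kmin: "\<And>k. hom_le (LZ k) (Zg n dir) \<Longrightarrow> K \<le> k"
    and ex3: "\<exists>u\<le>n. f u = 3"
begin

definition R0 where "R0 t = {s. s \<le> n \<and> f s = 0 \<and> (\<forall>u. btw t s u \<longrightarrow> f u \<noteq> 3)}"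
definition R3 where "R3 t = {s. s \<le> n \<and> f s = 3 \<and> (\<forall>u. btw t s u \<longrightarrow> f u \<noteq> 0)}"
definition D0 where "D0 t = Min (dd t ` R0 t)"
definition D3 where "D3 t = Min (dd t ` R3 t)"
definition cc where "cc x = (if x \<le> 2*K+2 then x else if even x then 2*K+2 else 2*K+1)"
definition pos where "pos t = (if f t = 0 then 0 else if f t = 3 then 2*K+3
   else if R0 t \<noteq> {} then cc (D0 t) else 2*K+3 - cc (D3 t))"

lemma fin: "finite (R0 t)" "finite (R3 t)"
  by (rule finite_subset[of _ "{..n}"], auto simp: R0_def R3_def)+

lemma D0_min: "R0 t \<noteq> {} \<Longrightarrow> \<exists>s\<in>R0 t. D0 t = dd t s"
proof -
  assume "R0 t \<noteq> {}"
  then have "Min (dd t ` R0 t) \<in> dd t ` R0 t" using fin by (intro Min_in) auto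
  then show ?thesis unfolding D0_def by auto
qed
lemma D0_le: "s \<in> R0 t \<Longrightarrow> D0 t \<le> dd t s"
  unfolding D0_def using fin by auto
lemma D3_min: "R3 t \<noteq> {} \<Longrightarrow> \<exists>s\<in>R3 t. D3 t = dd t s"
proof -
  assume "R3 t \<noteq> {}"
  then have "Min (dd t ` R3 t) \<in> dd t ` R3 t" using fin by (intro Min_in) auto
  then show ?thesis unfolding D3_def by auto
qed
lemma D3_le: "s \<in> R3 t \<Longrightarrow> D3 t \<le> dd t s"
  unfolding D3_def using fin by auto

lemma fle: "i \<le> n \<Longrightarrow> f i \<le> 3" using fH unfolding isH_def by blast

lemma par: "i \<le> n \<Longrightarrow> even (f i + i) = even (f 0)"
proof (induction i)
  case (Suc i)
  then have "f (Suc i) = Suc (f i) \<or> f i = Suc (f (Suc i))" using isH_step[OF fH] by simp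
  then show ?case using Suc by auto
qed simp

lemma par2: "a \<le> n \<Longrightarrow> b \<le> n \<Longrightarrow> even (f a + a) = even (f b + b)"
  using par by metis

lemma D0_par: assumes "t \<le> n" "R0 t \<noteq> {}" shows "even (D0 t) = even (f t)"
proof -
  obtain s where s: "s \<in> R0 t" "D0 t = dd t s" using D0_min assms by blast
  then have "s \<le> n" "f s = 0" unfolding R0_def by auto
  then have "even (f t + t) = even s" using par2[OF assms(1), of s] by simp
  then show ?thesis using s(2) even_dd[of t s] by auto
qed

lemma D3_par: assumes "t \<le> n" "R3 t \<noteq> {}" shows "even (D3 t) \<noteq> even (f t)"
proof -
  obtain s where s: "s \<in> R3 t" "D3 t = dd t s" using D3_min assms by blast
  then have "s \<le> n" "f s = 3" unfolding R3_def by auto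
  then have "even (f t + t) = odd s" using par2[OF assms(1), of s] by simp
  then show ?thesis using s(2) even_dd[of t s] by auto
qed

lemma D0_pos: assumes "f t \<noteq> 0" "R0 t \<noteq> {}" shows "1 \<le> D0 t"
proof -
  obtain s where s: "s \<in> R0 t" "D0 t = dd t s" using D0_min assms by blast
  then have "s \<noteq> t" using assms unfolding R0_def by auto
  then show ?thesis using s unfolding dd_def by auto
qed

lemma D3_pos: assumes "f t \<noteq> 3" "R3 t \<noteq> {}" shows "1 \<le> D3 t"
proof -
  obtain s where s: "s \<in> R3 t" "D3 t = dd t s" using D3_min assms by blast
  then have "s \<noteq> t" using assms unfolding R3_def by auto
  then show ?thesis using s unfolding dd_def by auto
qed

lemma cc_props: "1 \<le> x \<Longrightarrow> 1 \<le> cc x \<and> cc x \<le> 2*K+2 \<and> even (cc x) = even x"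
  unfolding cc_def by auto

lemma cc_adj: "adj x y \<Longrightarrow> adj (cc x) (cc y)"
  unfolding cc_def adj_def apply (auto split: if_splits)
  subgoal by (subgoal_tac "x = 2*K+2") auto
  subgoal by (subgoal_tac "y \<noteq> 2*K+2") auto
  done

lemma R3_ne: assumes t: "t \<le> n" "f t \<noteq> 0" "f t \<noteq> 3" "R0 t = {}" shows "R3 t \<noteq> {}"
proof -
  obtain u0 where "u0 \<le> n" "f u0 = 3" using ex3 by blast
  then obtain u where u: "u \<le> n" "f u = 3" and umin: "\<forall>v. v \<le> n \<and> f v = 3 \<longrightarrow> dd t u \<le> dd t v"
    using ex_has_least_nat[of "\<lambda>u. u \<le> n \<and> f u = 3" u0 "dd t"] by blast
  have "u \<in> R3 t" unfolding R3_def
  proof (intro CollectI conjI allI impI u)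
    fix w assume w: "btw t u w"
    show "f w \<noteq> 0"
    proof
      assume fw: "f w = 0"
      have "w \<le> n" using g9[OF w u(1) t(1)] .
      moreover have "\<forall>v. btw t w v \<longrightarrow> f v \<noteq> 3"
      proof (intro allI impI)
        fix v assume v: "btw t w v"
        have "btw t u v" using g7[OF w v] .
        then have "v \<le> n" "dd t v < dd t u" using g9[OF _ u(1) t(1)] g8[OF w] g8[of t w v] v by auto
        then show "f v \<noteq> 3" using umin by auto
      qed
      ultimately have "w \<in> R0 t" using fw unfolding R0_def by blast
      then show False using t(4) by blast
    qed
  qed
  then show ?thesis by blast
qed

lemma pos_lev: assumes t: "t \<le> n" shows "pos t \<le> 2*K+3 \<and> lev K (pos t) = f t"
proof -
  have f3: "f t \<le> 3" using fle t .
  show ?thesis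
  proof (cases "f t = 0 \<or> f t = 3")
    case True then show ?thesis unfolding pos_def by (auto simp: lev_def)
  next
    case False
    then have f12: "f t = 1 \<or> f t = 2" using f3 by auto
    show ?thesis
    proof (cases "R0 t \<noteq> {}")
      case True
      have "1 \<le> D0 t" using D0_pos False True by auto
      then have c: "1 \<le> cc (D0 t)" "cc (D0 t) \<le> 2*K+2" "even (cc (D0 t)) = even (f t)"
        using cc_props D0_par[OF t True] by auto
      have p: "pos t = cc (D0 t)" unfolding pos_def using False True by auto
      show ?thesis unfolding p using c f12 by (auto simp: lev_def)
    next
      case nR: False
      then have R3: "R3 t \<noteq> {}" using R3_ne t False by auto
      have "1 \<le> D3 t" using D3_pos False R3 by auto
      then have c: "1 \<le> cc (D3 t)" "cc (D3 t) \<le> 2*K+2" "even (cc (D3 t)) \<noteq> even (f t)"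
        using cc_props D3_par[OF t R3] by auto
      have p: "pos t = 2*K+3 - cc (D3 t)" unfolding pos_def using False nR by auto
      have e: "even (2*K+3 - cc (D3 t)) = odd (cc (D3 t))"
      proof -
        have "cc (D3 t) + (2*K+3 - cc (D3 t)) = 2*K+3" using c(2) by simp
        then have "odd (cc (D3 t) + (2*K+3 - cc (D3 t)))" by simp
        then show ?thesis by auto
      qed
      show ?thesis unfolding p using c f12 e by (auto simp: lev_def)
    qed
  qed
qed

end


context H3 begin

lemma R_eq: assumes "adj x y" "f x \<noteq> 0" "f x \<noteq> 3" "f y \<noteq> 0" "f y \<noteq> 3"
  shows "R0 x = R0 y \<and> R3 x = R3 y"
proof -
  have a: "R0 x \<subseteq> R0 y" if "adj x y" "f x \<noteq> 0" "f x \<noteq> 3" "f y \<noteq> 0" "f y \<noteq> 3" for x y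
  proof
    fix s assume s: "s \<in> R0 x"
    then have "s \<noteq> x" "s \<noteq> y" using that unfolding R0_def by auto
    then show "s \<in> R0 y" using s g4[OF that(1)] that unfolding R0_def by blast
  qed
  have b: "R3 x \<subseteq> R3 y" if "adj x y" "f x \<noteq> 0" "f x \<noteq> 3" "f y \<noteq> 0" "f y \<noteq> 3" for x y
  proof
    fix s assume s: "s \<in> R3 x"
    then have "s \<noteq> x" "s \<noteq> y" using that unfolding R3_def by auto
    then show "s \<in> R3 y" using s g4[OF that(1)] that unfolding R3_def by blast
  qed
  have "adj y x" using assms(1) adj_sym by blast
  then show ?thesis using a[OF assms] b[OF assms] a[of y x] b[of y x] assms by blast
qed

lemma fadj: "adj x y \<Longrightarrow> x \<le> n \<Longrightarrow> y \<le> n \<Longrightarrow> even (f x) \<noteq> even (f y)"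
  using isH_adj[OF fH] by fastforce

lemma NN: assumes xy: "adj x y" "x \<le> n" "y \<le> n" and fx: "f x \<noteq> 0" "f x \<noteq> 3" and fy: "f y \<noteq> 0" "f y \<noteq> 3"
  shows "adj (pos x) (pos y)"
proof -
  have R: "R0 x = R0 y" "R3 x = R3 y" using R_eq[OF xy(1) fx fy] by auto
  have yx: "adj y x" using xy(1) adj_sym by blast
  have pf: "even (f x) \<noteq> even (f y)" using fadj xy by blast
  show ?thesis
  proof (cases "R0 x \<noteq> {}")
    case True
    then have Ty: "R0 y \<noteq> {}" using R by simp
    obtain sx where sx: "sx \<in> R0 x" "D0 x = dd x sx" using D0_min True by blast
    obtain sy where sy: "sy \<in> R0 y" "D0 y = dd y sy" using D0_min Ty by blast
    have "D0 y \<le> dd y sx" using D0_le sx(1) R by simp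
    also have "\<dots> \<le> Suc (dd x sx)" using g5[OF xy(1)] .
    finally have l1: "D0 y \<le> Suc (D0 x)" using sx by simp
    have "D0 x \<le> dd x sy" using D0_le sy(1) R by simp
    also have "\<dots> \<le> Suc (dd y sy)" using g5[OF yx] .
    finally have l2: "D0 x \<le> Suc (D0 y)" using sy by simp
    have "even (D0 x) \<noteq> even (D0 y)" using D0_par[OF xy(2) True] D0_par[OF xy(3) Ty] pf by simp
    then have "adj (D0 x) (D0 y)" using adj_of_close l1 l2 by blast
    then have "adj (cc (D0 x)) (cc (D0 y))" using cc_adj by blast
    moreover have "pos x = cc (D0 x)" "pos y = cc (D0 y)" unfolding pos_def using fx fy True Ty by auto
    ultimately show ?thesis by simp
  next
    case False
    then have Fy: "R0 y = {}" using R by simp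
    have T: "R3 x \<noteq> {}" using R3_ne xy(2) fx False by blast
    then have Ty: "R3 y \<noteq> {}" using R by simp
    obtain sx where sx: "sx \<in> R3 x" "D3 x = dd x sx" using D3_min T by blast
    obtain sy where sy: "sy \<in> R3 y" "D3 y = dd y sy" using D3_min Ty by blast
    have "D3 y \<le> dd y sx" using D3_le sx(1) R by simp
    also have "\<dots> \<le> Suc (dd x sx)" using g5[OF xy(1)] .
    finally have l1: "D3 y \<le> Suc (D3 x)" using sx by simp
    have "D3 x \<le> dd x sy" using D3_le sy(1) R by simp
    also have "\<dots> \<le> Suc (dd y sy)" using g5[OF yx] .
    finally have l2: "D3 x \<le> Suc (D3 y)" using sy by simp
    have "even (D3 x) \<noteq> even (D3 y)" using D3_par[OF xy(2) T] D3_par[OF xy(3) Ty] pf by auto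
    then have "adj (D3 x) (D3 y)" using adj_of_close l1 l2 by blast
    then have a: "adj (cc (D3 x)) (cc (D3 y))" using cc_adj by blast
    have "1 \<le> D3 x" "1 \<le> D3 y" using D3_pos fx fy T Ty by auto
    then have "cc (D3 x) \<le> 2*K+3" "cc (D3 y) \<le> 2*K+3" using cc_props by force+
    then have "adj (2*K+3 - cc (D3 x)) (2*K+3 - cc (D3 y))" using adj_sub[OF a] by blast
    moreover have "pos x = 2*K+3 - cc (D3 x)" "pos y = 2*K+3 - cc (D3 y)" unfolding pos_def using fx fy False Fy by auto
    ultimately show ?thesis by simp
  qed
qed

lemma E0: assumes xy: "adj x y" "x \<le> n" "y \<le> n" and fx: "f x = 0" shows "pos y = 1"
proof -
  have fy: "f y = 1" using isH_adj[OF fH xy(2) xy(3) xy(1)] fx by auto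
  have "x \<in> R0 y" unfolding R0_def using xy fx g6[OF xy(1)] by auto
  then have R: "R0 y \<noteq> {}" by blast
  have "D0 y \<le> 1" using D0_le[OF \<open>x \<in> R0 y\<close>] adj_dd1[OF xy(1)] by simp
  moreover have "1 \<le> D0 y" using D0_pos R fy by simp
  ultimately have "D0 y = 1" by simp
  then show ?thesis unfolding pos_def using fy R by (simp add: cc_def)
qed

lemma E3: assumes xy: "adj x y" "x \<le> n" "y \<le> n" and fx: "f x = 3" shows "pos y = 2*K+2"
proof -
  have "f y = Suc (f x) \<or> f x = Suc (f y)" using isH_adj[OF fH xy(2) xy(3) xy(1)] .
  moreover have "f y \<le> 3" using fle xy(3) .
  ultimately have fy: "f y = 2" using fx by auto
  show ?thesis
  proof (cases "R0 y \<noteq> {}")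
    case True
    obtain s where s: "s \<in> R0 y" "D0 y = dd y s" using D0_min True by blast
    have smin: "\<And>s'. s' \<in> R0 y \<Longrightarrow> dd y s \<le> dd y s'"
    proof -
      fix s' assume "s' \<in> R0 y" then show "dd y s \<le> dd y s'" using D0_le[of s' y] s(2) by simp
    qed
    have sn: "s \<le> n" "f s = 0" and sc: "\<forall>u. btw y s u \<longrightarrow> f u \<noteq> 3" using s(1) unfolding R0_def by auto
    have "s \<noteq> x" "s \<noteq> y" using sn fx fy by auto
    moreover have "\<not> btw y s x" using sc fx by blast
    ultimately have bx: "btw x s y" using g1[OF xy(1)] by blast
    have clean: "\<forall>u. btw s x u \<longrightarrow> f u \<noteq> 0 \<and> f u \<noteq> 3"
    proof (intro allI impI)
      fix u assume u: "btw s x u"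
      then have "u = y \<or> btw y s u" using g2[OF xy(1) bx] by blast
      then show "f u \<noteq> 0 \<and> f u \<noteq> 3"
      proof
        assume "u = y" then show ?thesis using fy by simp
      next
        assume bu: "btw y s u"
        have "f u \<noteq> 0"
        proof
          assume fu: "f u = 0"
          have "u \<le> n" using g9[OF bu sn(1) xy(3)] .
          moreover have "\<forall>v. btw y u v \<longrightarrow> f v \<noteq> 3" using sc g7[OF bu] by blast
          ultimately have "u \<in> R0 y" using fu unfolding R0_def by blast
          then have "dd y s \<le> dd y u" using smin by blast
          then show False using g8[OF bu] by simp
        qed
        then show ?thesis using sc bu by blast
      qed
    qed
    obtain k where k: "dd s x = 2*k+3" "hom_le (LZ k) (Zg n dir)"
      using seg3[OF fH sn(1) xy(2) sn(2) fx clean] by blast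
    have "K \<le> k" using Kmin k(2) .
    have "dd x s = Suc (dd y s)" using g3[OF xy(1) bx] .
    then have "D0 y = 2*k+2" using s(2) k(1) dd_sym[of s x] by simp
    then have "cc (D0 y) = 2*K+2" using \<open>K \<le> k\<close> unfolding cc_def by auto
    then show ?thesis unfolding pos_def using fy True by simp
  next
    case False
    have "x \<in> R3 y" unfolding R3_def using xy fx g6[OF xy(1)] by auto
    then have R: "R3 y \<noteq> {}" by blast
    have "D3 y \<le> 1" using D3_le[OF \<open>x \<in> R3 y\<close>] adj_dd1[OF xy(1)] by simp
    moreover have "1 \<le> D3 y" using D3_pos R fy by simp
    ultimately have "D3 y = 1" by simp
    then show ?thesis unfolding pos_def using fy False by (simp add: cc_def)
  qed
qed

lemma pos_adj: assumes i: "i < n" shows "adj (pos i) (pos (Suc i))"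
proof -
  have a: "adj i (Suc i)" "adj (Suc i) i" unfolding adj_def by auto
  have n: "i \<le> n" "Suc i \<le> n" using i by auto
  have "f (Suc i) = Suc (f i) \<or> f i = Suc (f (Suc i))" using isH_step[OF fH i] .
  show ?thesis
  proof (cases "f i = 0")
    case True then show ?thesis using E0[OF a(1) n True] unfolding pos_def adj_def by simp
  next
    case f0: False
    show ?thesis
    proof (cases "f (Suc i) = 0")
      case True then show ?thesis using E0[OF a(2) n(2) n(1) True] unfolding pos_def adj_def by simp
    next
      case f1: False
      show ?thesis
      proof (cases "f i = 3")
        case True then show ?thesis using E3[OF a(1) n True] unfolding pos_def adj_def by simp
      next
        case f2: False
        show ?thesis
        proof (cases "f (Suc i) = 3")
          case True then show ?thesis using E3[OF a(2) n(2) n(1) True] unfolding pos_def adj_def by simp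
        next
          case False
          then show ?thesis using NN[OF a(1) n f0 f2 f1 False] by simp
        qed
      qed
    qed
  qed
qed

lemma hom_to_LZ: "hom_le (Zg n dir) (LZ K)"
  unfolding hom_Zg_iff
proof (intro exI[of _ pos] conjI allI impI)
  fix i assume "i \<le> n" then show "pos i \<in> verts (LZ K)" using pos_lev by simp
next
  fix i assume i: "i < n" "dir i"
  then have "f (Suc i) = Suc (f i)" using fH unfolding isH_def by auto
  then have "lev K (pos (Suc i)) = Suc (lev K (pos i))" using pos_lev i by simp
  then show "(pos i, pos (Suc i)) \<in> arcs (LZ K)"
    using LZ_arc pos_lev pos_adj i by simp
next
  fix i assume i: "i < n" "\<not> dir i"
  then have "f i = Suc (f (Suc i))" using fH unfolding isH_def by auto
  then have "lev K (pos i) = Suc (lev K (pos (Suc i)))" using pos_lev i by simp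
  moreover have "adj (pos (Suc i)) (pos i)" using pos_adj[OF i(1)] adj_sym by blast
  ultimately show "(pos (Suc i), pos i) \<in> arcs (LZ K)"
    using LZ_arc pos_lev i by simp
qed

end


lemma btw_dd: "btw s j u \<Longrightarrow> dd u j < dd s j \<and> dd s u < dd s j"
  unfolding btw_def dd_def by auto

lemma closest_pair:
  assumes "s0 \<le> n" "j0 \<le> n" "f s0 = (a::nat)" "f j0 = b"
  shows "\<exists>s j. s \<le> n \<and> j \<le> n \<and> f s = a \<and> f j = b \<and> (\<forall>u. btw s j u \<longrightarrow> f u \<noteq> a \<and> f u \<noteq> b)"
proof -
  obtain p where p: "fst p \<le> n \<and> snd p \<le> n \<and> f (fst p) = a \<and> f (snd p) = b"
    and pm: "\<forall>q. fst q \<le> n \<and> snd q \<le> n \<and> f (fst q) = a \<and> f (snd q) = b \<longrightarrow> dd (fst p) (snd p) \<le> dd (fst q) (snd q)"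
    using ex_has_least_nat[of "\<lambda>p. fst p \<le> n \<and> snd p \<le> n \<and> f (fst p) = a \<and> f (snd p) = b" "(s0, j0)" "\<lambda>p. dd (fst p) (snd p)"]
      assms by auto
  define s j where "s = fst p" "j = snd p"
  have "\<forall>u. btw s j u \<longrightarrow> f u \<noteq> a \<and> f u \<noteq> b"
  proof (intro allI impI conjI)
    fix u assume u: "btw s j u"
    have un: "u \<le> n" using g9[OF u] p s_j_def by auto
    show "f u \<noteq> a"
    proof
      assume "f u = a"
      then have "dd s j \<le> dd u j" using pm[rule_format, of "(u, j)"] p un s_j_def by auto
      then show False using btw_dd[OF u] by simp
    qed
    show "f u \<noteq> b"
    proof
      assume "f u = b"
      then have "dd s j \<le> dd s u" using pm[rule_format, of "(s, u)"] p un s_j_def by auto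
      then show False using btw_dd[OF u] by simp
    qed
  qed
  then show ?thesis using p s_j_def by blast
qed

lemma hits_0: assumes "isH n dir f N" "\<not> hom_le (Zg n dir) (dipath (N - 1))" "1 \<le> N"
  shows "\<exists>u\<le>n. f u = 0"
proof (rule ccontr)
  assume "\<not> (\<exists>u\<le>n. f u = 0)"
  then have "isH n dir (\<lambda>i. f i - 1) (N - 1)" using assms(1) unfolding isH_def
    by (auto split: if_splits)
  then show False using assms(2) hom_dipath_iff by blast
qed

lemma hits_top: assumes "isH n dir f N" "\<not> hom_le (Zg n dir) (dipath (N - 1))" "1 \<le> N"
  shows "\<exists>u\<le>n. f u = N"
proof (rule ccontr)
  assume "\<not> (\<exists>u\<le>n. f u = N)"
  then have "isH n dir f (N - 1)" using assms(1) unfolding isH_def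
  proof (intro conjI allI impI)
    fix i assume "i \<le> n" then have "f i \<le> N" "f i \<noteq> N" using assms(1) \<open>\<not> (\<exists>u\<le>n. f u = N)\<close> unfolding isH_def by auto
    then show "f i \<le> N - 1" by simp
  next
    fix i assume "i < n" then show "if dir i then f (Suc i) = Suc (f i) else f i = Suc (f (Suc i))"
      using assms(1) unfolding isH_def by blast
  qed
  then show False using assms(2) hom_dipath_iff by blast
qed

theorem Z3: assumes fH: "isH n dir f 3" and n2: "\<not> hom_le (Zg n dir) (dipath 2)"
  shows "\<exists>K. hom_equiv (Zg n dir) (LZ K)"
proof -
  obtain s0 where s0: "s0 \<le> n" "f s0 = 0" using hits_0[OF fH] n2 by auto
  obtain j0 where j0: "j0 \<le> n" "f j0 = 3" using hits_top[OF fH] n2 by auto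
  obtain s j where sj: "s \<le> n" "j \<le> n" "f s = 0" "f j = 3" "\<forall>u. btw s j u \<longrightarrow> f u \<noteq> 0 \<and> f u \<noteq> 3"
    using closest_pair[OF s0(1) j0(1) s0(2) j0(2)] by blast
  obtain k0 where "hom_le (LZ k0) (Zg n dir)" using seg3[OF fH sj] by blast
  define K where "K = (LEAST k. hom_le (LZ k) (Zg n dir))"
  have K1: "hom_le (LZ K) (Zg n dir)" unfolding K_def by (rule LeastI) fact
  have K2: "\<And>k. hom_le (LZ k) (Zg n dir) \<Longrightarrow> K \<le> k" unfolding K_def by (rule Least_le)
  interpret H3 n dir f K
    by (unfold_locales) (use fH K2 j0 in blast)+
  have "hom_le (Zg n dir) (LZ K)" by (rule hom_to_LZ)
  then show ?thesis using K1 unfolding hom_equiv_def by blast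
qed

theorem Z2: assumes fH: "isH n dir f 2" and n1: "\<not> hom_le (Zg n dir) (dipath 1)"
  shows "hom_le (dipath 2) (Zg n dir)"
proof -
  obtain s0 where s0: "s0 \<le> n" "f s0 = 0" using hits_0[OF fH] n1 by auto
  obtain j0 where j0: "j0 \<le> n" "f j0 = 2" using hits_top[OF fH] n1 by auto
  obtain s j where sj: "s \<le> n" "j \<le> n" "f s = 0" "f j = 2" and cl: "\<forall>u. btw s j u \<longrightarrow> f u \<noteq> 0 \<and> f u \<noteq> 2"
    using closest_pair[OF s0(1) j0(1) s0(2) j0(2)] by blast
  define sg where "sg p = (if s \<le> j then s + p else s - p)" for p
  have "s \<noteq> j" using sj by auto
  have a01: "adj (sg 0) (sg 1)" unfolding sg_def adj_def using \<open>s \<noteq> j\<close> by auto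
  have sg0: "sg 0 = s" unfolding sg_def by simp
  have "sg 1 \<le> n" unfolding sg_def using sj \<open>s \<noteq> j\<close> by auto
  have f1: "f (sg 1) = 1" using isH_adj[OF fH _ \<open>sg 1 \<le> n\<close> a01] sj sg0 by auto
  then have "sg 1 \<noteq> j" using sj by auto
  then have b1: "btw s j (sg 1)" unfolding sg_def btw_def using \<open>s \<noteq> j\<close> by auto
  have a12: "adj (sg 1) (sg 2)" unfolding sg_def adj_def using b1 unfolding btw_def by auto
  have "sg 2 \<le> n" unfolding sg_def using sj b1 unfolding btw_def by auto
  have "f (sg 2) = 0 \<or> f (sg 2) = 2" using isH_adj[OF fH \<open>sg 1 \<le> n\<close> \<open>sg 2 \<le> n\<close> a12] f1 by auto
  then have "sg 2 = j"
  proof -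
    assume "f (sg 2) = 0 \<or> f (sg 2) = 2"
    show "sg 2 = j"
    proof (rule ccontr)
      assume "sg 2 \<noteq> j"
      then have "btw s j (sg 2)" unfolding sg_def btw_def using b1 unfolding btw_def sg_def by auto
      then show False using cl \<open>f (sg 2) = 0 \<or> f (sg 2) = 2\<close> by blast
    qed
  qed
  show ?thesis unfolding dipath_Zg hom_Zg_iff
  proof (intro exI[of _ sg] conjI allI impI)
    fix i :: nat assume "i \<le> 2"
    then have "i = 0 \<or> i = 1 \<or> i = 2" by auto
    then show "sg i \<in> verts (Zg n dir)" using sj \<open>sg 1 \<le> n\<close> \<open>sg 2 \<le> n\<close> sg0 by auto
  next
    fix i :: nat assume "i < 2" "True"
    then have "i = 0 \<or> i = 1" by auto
    then show "(sg i, sg (Suc i)) \<in> arcs (Zg n dir)"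
    proof
      assume "i = 0" then show ?thesis using isH_adj_arc[OF fH _ \<open>sg 1 \<le> n\<close> a01] sj sg0 f1 by simp
    next
      assume "i = 1" then show ?thesis using isH_adj_arc[OF fH \<open>sg 1 \<le> n\<close> \<open>sg 2 \<le> n\<close> a12] sj \<open>sg 2 = j\<close> f1
        by (simp add: numeral_2_eq_2)
    qed
  qed auto
qed

lemma Zedge: assumes "1 \<le> n" shows "hom_le (dipath 1) (Zg n dir)"
  unfolding dipath_Zg hom_Zg_iff
proof (intro exI[of _ "\<lambda>i::nat. if dir 0 then i else 1 - i"] conjI allI impI)
  fix i :: nat assume "i \<le> 1" then show "(if dir 0 then i else 1 - i) \<in> verts (Zg n dir)" using assms by auto
next
  fix i :: nat assume "i < 1" "True"
  then show "((if dir 0 then i else 1 - i), (if dir 0 then Suc i else 1 - Suc i)) \<in> arcs (Zg n dir)"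
    using assms by (auto simp: arcs_Zg)
qed auto

lemma Zg0: "Zg 0 dir = dipath 0" by (simp add: Zg_def dipath_def)

lemma Z_to_P0: "hom_le (Zg n dir) (dipath 0) \<Longrightarrow> n = 0"
proof (rule ccontr)
  assume h: "hom_le (Zg n dir) (dipath 0)" "n \<noteq> 0"
  then have "1 \<le> n" by simp
  then have "hom_le (dipath 1) (Zg n dir)" by (rule Zedge)
  then have "hom_le (dipath 1) (dipath 0)" using hom_trans h(1) by blast
  then show False using dipath_le_iff by simp
qed

lemma height_equiv: "hom_equiv G H \<Longrightarrow> height G = height H"
proof -
  assume "hom_equiv G H"
  then have "\<And>k. hom_le G (dipath k) = hom_le H (dipath k)"
    unfolding hom_equiv_def using hom_trans[of G H "dipath _"] hom_trans[of H G "dipath _"] by blast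
  then show ?thesis unfolding height_def by simp
qed



definition pidx :: "nat \<Rightarrow> Lvert \<Rightarrow> nat" where
  "pidx k v = (case v of La \<Rightarrow> 0 | Lb i \<Rightarrow> 2*i+1 | Lc i \<Rightarrow> 2*i+2 | Ld \<Rightarrow> 2*k+3)"
definition vmap :: "nat \<Rightarrow> nat \<Rightarrow> Lvert" where
  "vmap k p = (if p = 0 then La else if 2*k+3 \<le> p then Ld else if odd p then Lb (p div 2) else Lc (p div 2 - 1))"

lemma verts_L: "verts (Lpath k) = {La, Ld} \<union> Lb ` {0..k} \<union> Lc ` {0..k}"
  by (simp add: Lpath_def verts_def)
lemma arcs_L: "arcs (Lpath k) = {(La, Lb 0), (Lc k, Ld)} \<union> {(Lb i, Lc i) | i. i \<le> k}
              \<union> {(Lb (Suc i), Lc i) | i. i < k}"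
  by (simp add: Lpath_def arcs_def)

lemma Lverts_to: "x \<in> verts (Lpath k) \<Longrightarrow> pidx k x \<le> 2*k+3 \<and> vmap k (pidx k x) = x"
  unfolding verts_L pidx_def vmap_def by auto

lemma odd_form: "odd (p::nat) \<Longrightarrow> \<exists>m. p = 2*m+1" by (metis oddE)
lemma even_form: "even (p::nat) \<Longrightarrow> p \<noteq> 0 \<Longrightarrow> \<exists>m. p = 2*m+2"
proof -
  assume "even p" "p \<noteq> 0"
  then obtain q where "p = 2*q" by blast
  then show ?thesis using \<open>p \<noteq> 0\<close> by (intro exI[of _ "q - 1"]) auto
qed

lemma vmap_verts: assumes "p \<le> 2*k+3" shows "vmap k p \<in> verts (Lpath k) \<and> pidx k (vmap k p) = p"
proof (cases "p = 0 \<or> p = 2*k+3")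
  case True then show ?thesis unfolding verts_L pidx_def vmap_def by auto
next
  case False
  then have p: "p \<noteq> 0" "p < 2*k+3" using assms by auto
  show ?thesis
  proof (cases "odd p")
    case True
    then obtain m where m: "p = 2*m+1" using odd_form by blast
    then have "m \<le> k" using p by simp
    then show ?thesis unfolding verts_L pidx_def vmap_def using m p by auto
  next
    case False
    then obtain m where m: "p = 2*m+2" using even_form p by blast
    then have "m \<le> k" using p by simp
    then show ?thesis unfolding verts_L pidx_def vmap_def using m p by auto
  qed
qed

lemma Larc_to: assumes "(x,y) \<in> arcs (Lpath k)" shows "(pidx k x, pidx k y) \<in> arcs (LZ k)"
proof -
  have "(x = La \<and> y = Lb 0) \<or> (x = Lc k \<and> y = Ld) \<or> (\<exists>i\<le>k. x = Lb i \<and> y = Lc i) \<or> (\<exists>i<k. x = Lb (Suc i) \<and> y = Lc i)"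
    using assms unfolding arcs_L by auto
  then show ?thesis
  proof (elim disjE exE conjE)
    assume "x = La" "y = Lb 0" then show ?thesis by (intro LZ_arc) (auto simp: pidx_def adj_def lev_def)
  next
    assume "x = Lc k" "y = Ld" then show ?thesis by (intro LZ_arc) (auto simp: pidx_def adj_def lev_def)
  next
    fix i assume "i \<le> k" "x = Lb i" "y = Lc i" then show ?thesis by (intro LZ_arc) (auto simp: pidx_def adj_def lev_def)
  next
    fix i assume "i < k" "x = Lb (Suc i)" "y = Lc i" then show ?thesis by (intro LZ_arc) (auto simp: pidx_def adj_def lev_def)
  qed
qed

lemma LZarc_to: assumes "(a,b) \<in> arcs (LZ k)" shows "(vmap k a, vmap k b) \<in> arcs (Lpath k)"
proof -
  obtain i where i: "i < 2*k+3" "(a = i \<and> b = Suc i \<and> dirL k i) \<or> (a = Suc i \<and> b = i \<and> \<not> dirL k i)"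
    using assms unfolding LZ_def arcs_Zg by auto
  from i(2) show ?thesis
  proof (elim disjE conjE)
    assume ab: "a = i" "b = Suc i" "dirL k i"
    then have "i = 0 \<or> odd i \<or> i = 2*k+2" unfolding dirL_def by simp
    then show ?thesis
    proof (elim disjE)
      assume "i = 0" then show ?thesis using ab by (simp add: vmap_def arcs_L)
    next
      assume "odd i"
      then obtain m where m: "i = 2*m+1" using odd_form by blast
      then have "m \<le> k" using i(1) by simp
      then show ?thesis using ab m by (simp add: vmap_def arcs_L)
    next
      assume "i = 2*k+2" then show ?thesis using ab by (simp add: vmap_def arcs_L)
    qed
  next
    assume ab: "a = Suc i" "b = i" "\<not> dirL k i"
    then have "even i" "i \<noteq> 0" "i \<noteq> 2*k+2" unfolding dirL_def by auto
    then obtain m where m: "i = 2*m+2" using even_form by blast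
    then have "m < k" using i(1) \<open>i \<noteq> 2*k+2\<close> by simp
    then show ?thesis using ab m by (simp add: vmap_def arcs_L)
  qed
qed

lemma Lpath_LZ: "hom_equiv (Lpath k) (LZ k)"
  unfolding hom_equiv_def
proof
  show "hom_le (Lpath k) (LZ k)"
    by (rule homI[of _ "pidx k"]) (use Lverts_to Larc_to in auto)
  show "hom_le (LZ k) (Lpath k)"
    by (rule homI[of _ "vmap k"]) (use vmap_verts LZarc_to in auto)
qed

lemma op_Lpath: "oriented_path (Lpath k)"
  unfolding oriented_path_def
proof (intro exI[of _ "map (vmap k) [0..<2*k+4]"] conjI allI impI)
  show "map (vmap k) [0..<2*k+4] \<noteq> []" by simp
  have inj: "inj_on (vmap k) {0..<2*k+4}"
    by (rule inj_on_inverseI[of _ "pidx k"]) (use vmap_verts in auto)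
  then show "distinct (map (vmap k) [0..<2*k+4])" by (simp add: distinct_map)
  show "set (map (vmap k) [0..<2*k+4]) = verts (Lpath k)"
  proof
    show "set (map (vmap k) [0..<2*k+4]) \<subseteq> verts (Lpath k)" using vmap_verts by auto
    show "verts (Lpath k) \<subseteq> set (map (vmap k) [0..<2*k+4])"
    proof
      fix x assume "x \<in> verts (Lpath k)"
      then have "pidx k x < 2*k+4" "vmap k (pidx k x) = x" using Lverts_to by force+
      then show "x \<in> set (map (vmap k) [0..<2*k+4])" by (metis atLeastLessThan_iff image_eqI le0 set_map set_upt)
    qed
  qed
  have iff: "a \<le> 2*k+3 \<Longrightarrow> b \<le> 2*k+3 \<Longrightarrow> (vmap k a, vmap k b) \<in> arcs (Lpath k) \<longleftrightarrow> (a,b) \<in> arcs (LZ k)" for a b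
    using Larc_to[of "vmap k a" "vmap k b" k] LZarc_to[of a b k] vmap_verts[of a k] vmap_verts[of b k] by auto
  fix i assume i: "Suc i < length (map (vmap k) [0..<2*k+4])"
  then have i': "i < 2*k+3" by simp
  have nth: "map (vmap k) [0..<2*k+4] ! i = vmap k i" "map (vmap k) [0..<2*k+4] ! Suc i = vmap k (Suc i)"
    using i' by (simp_all add: nth_append del: upt_Suc)
  show "((map (vmap k) [0..<2*k+4] ! i, map (vmap k) [0..<2*k+4] ! Suc i) \<in> arcs (Lpath k)) \<noteq>
        ((map (vmap k) [0..<2*k+4] ! Suc i, map (vmap k) [0..<2*k+4] ! i) \<in> arcs (Lpath k))"
    unfolding nth using iff[of i "Suc i"] iff[of "Suc i" i] i' by (auto simp: LZ_def arcs_Zg)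
next
  show "arcs (Lpath k) \<subseteq> {e. \<exists>i. Suc i < length (map (vmap k) [0..<2*k+4]) \<and>
        (e = (map (vmap k) [0..<2*k+4] ! i, map (vmap k) [0..<2*k+4] ! Suc i) \<or>
         e = (map (vmap k) [0..<2*k+4] ! Suc i, map (vmap k) [0..<2*k+4] ! i))}"
  proof
    fix e assume e: "e \<in> arcs (Lpath k)"
    obtain x y where xy: "e = (x,y)" by fastforce
    have xv: "x \<in> verts (Lpath k)" "y \<in> verts (Lpath k)"
      using e xy unfolding arcs_L verts_L by auto
    have "(pidx k x, pidx k y) \<in> arcs (LZ k)" using Larc_to e xy by simp
    then obtain i where i: "i < 2*k+3" "(pidx k x = i \<and> pidx k y = Suc i) \<or> (pidx k x = Suc i \<and> pidx k y = i)"
      unfolding LZ_def arcs_Zg by auto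
    have nth: "map (vmap k) [0..<2*k+4] ! i = vmap k i" "map (vmap k) [0..<2*k+4] ! Suc i = vmap k (Suc i)"
      using i(1) by (simp_all del: upt_Suc)
    have "x = vmap k (pidx k x)" "y = vmap k (pidx k y)" using Lverts_to xv by auto
    then show "e \<in> {e. \<exists>i. Suc i < length (map (vmap k) [0..<2*k+4]) \<and>
        (e = (map (vmap k) [0..<2*k+4] ! i, map (vmap k) [0..<2*k+4] ! Suc i) \<or>
         e = (map (vmap k) [0..<2*k+4] ! Suc i, map (vmap k) [0..<2*k+4] ! i))}"
      using i nth xy by (intro CollectI exI[of _ i]) auto
  qed
qed



lemma op_Z: assumes "oriented_path G" shows "\<exists>n dir. hom_equiv G (Zg n dir)"
proof -
  obtain ps where ps: "ps \<noteq> []" "distinct ps" "set ps = verts G"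
    and xo: "\<forall>i. Suc i < length ps \<longrightarrow> ((ps!i, ps!Suc i) \<in> arcs G) \<noteq> ((ps!Suc i, ps!i) \<in> arcs G)"
    and sub: "arcs G \<subseteq> {e. \<exists>i. Suc i < length ps \<and> (e = (ps!i, ps!Suc i) \<or> e = (ps!Suc i, ps!i))}"
    using assms unfolding oriented_path_def by blast
  define n where "n = length ps - 1"
  define dir where "dir i = ((ps!i, ps!Suc i) \<in> arcs G)" for i
  define idx where "idx x = (THE i. i < length ps \<and> ps!i = x)" for x
  have ln: "length ps = Suc n" using ps(1) unfolding n_def by simp
  have idx1: "x \<in> set ps \<Longrightarrow> idx x < length ps \<and> ps ! idx x = x" for x
    unfolding idx_def by (rule theI') (use distinct_Ex1[OF ps(2)] in blast)
  have idx2: "i < length ps \<Longrightarrow> idx (ps ! i) = i" for i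
    unfolding idx_def by (rule the_equality) (use ps(2) nth_eq_iff_index_eq in auto)
  have "hom_le G (Zg n dir)"
  proof (rule homI[of _ idx])
    fix x assume "x \<in> verts G" then show "idx x \<in> verts (Zg n dir)" using idx1 ps(3) ln by force
  next
    fix x y assume "(x,y) \<in> arcs G"
    then obtain i where i: "Suc i < length ps" "(x,y) = (ps!i, ps!Suc i) \<or> (x,y) = (ps!Suc i, ps!i)"
      using sub by blast
    have ii: "idx (ps!i) = i" "idx (ps!Suc i) = Suc i" using idx2 i(1) by auto
    from i(2) show "(idx x, idx y) \<in> arcs (Zg n dir)"
    proof
      assume e: "(x,y) = (ps!i, ps!Suc i)"
      then have "dir i" unfolding dir_def using \<open>(x,y) \<in> arcs G\<close> by simp
      then show ?thesis using e ii i(1) ln by (auto simp: arcs_Zg)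
    next
      assume e: "(x,y) = (ps!Suc i, ps!i)"
      then have "\<not> dir i" unfolding dir_def using \<open>(x,y) \<in> arcs G\<close> xo i(1) by auto
      then show ?thesis using e ii i(1) ln by (auto simp: arcs_Zg)
    qed
  qed
  moreover have "hom_le (Zg n dir) G"
    unfolding hom_Zg_iff
  proof (intro exI[of _ "nth ps"] conjI allI impI)
    fix i assume "i \<le> n" then show "ps ! i \<in> verts G" using ps(3) ln by auto
  next
    fix i assume "i < n" "dir i" then show "(ps ! i, ps ! Suc i) \<in> arcs G" unfolding dir_def by simp
  next
    fix i assume "i < n" "\<not> dir i" then show "(ps ! Suc i, ps ! i) \<in> arcs G" using xo ln unfolding dir_def by auto
  qed
  ultimately show ?thesis unfolding hom_equiv_def by blast
qed

lemma le_refl: "hom_le A A"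
  by (rule homI[of _ id]) auto
lemma equiv_refl: "hom_equiv A A"
  unfolding hom_equiv_def using le_refl by blast

lemma le_cong: assumes "hom_equiv A A'" "hom_equiv B B'" shows "hom_le A B = hom_le A' B'"
proof
  assume "hom_le A B"
  then show "hom_le A' B'" using assms unfolding hom_equiv_def using hom_trans[of A' A B] hom_trans[of A' B B'] by blast
next
  assume "hom_le A' B'"
  then show "hom_le A B" using assms unfolding hom_equiv_def using hom_trans[of A A' B'] hom_trans[of A B' B] by blast
qed

lemma heightZ: "hom_le (Zg n dir) (dipath (height (Zg n dir))) \<and> (\<forall>j<height (Zg n dir). \<not> hom_le (Zg n dir) (dipath j))"
proof -
  obtain N where "hom_le (Zg n dir) (dipath N)" using Zg_exists_dipath by blast
  then show ?thesis unfolding height_def by (meson LeastI not_less_Least)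
qed

lemma height_LZ: "height (LZ k) = 3"
  unfolding height_def
  by (rule Least_equality) (use LZ_dipath3 LZ_dipath_ge in auto)

lemma height3_class: assumes "oriented_path G" "height G = 3" shows "\<exists>k. hom_equiv G (Lpath k)"
proof -
  obtain n dir where e: "hom_equiv G (Zg n dir)" using op_Z assms(1) by blast
  have h: "height (Zg n dir) = 3" using height_equiv[OF e] assms(2) by simp
  then have "hom_le (Zg n dir) (dipath 3)" "\<not> hom_le (Zg n dir) (dipath 2)" using heightZ[of n dir] by auto
  then obtain f where "isH n dir f 3" "\<not> hom_le (Zg n dir) (dipath 2)" using hom_dipath_iff by blast
  then obtain K where "hom_equiv (Zg n dir) (LZ K)" using Z3 by blast
  then have "hom_equiv G (LZ K)" using equiv_trans e by blast
  then have "hom_equiv G (Lpath K)" using equiv_trans equiv_sym[OF Lpath_LZ[of K]] by blast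
  then show ?thesis by blast
qed

lemma height_le3_class: assumes "oriented_path G" "height G \<le> 3"
  shows "hom_equiv G (dipath 0) \<or> hom_equiv G (dipath 1) \<or> hom_equiv G (dipath 2) \<or> (\<exists>k. hom_equiv G (Lpath k))"
proof -
  obtain n dir where e: "hom_equiv G (Zg n dir)" using op_Z assms(1) by blast
  define h where "h = height (Zg n dir)"
  have hG: "height G = h" using height_equiv[OF e] h_def by simp
  have hz: "hom_le (Zg n dir) (dipath h)" "\<forall>j<h. \<not> hom_le (Zg n dir) (dipath j)" using heightZ h_def by auto
  have "h = 0 \<or> h = 1 \<or> h = 2 \<or> h = 3" using assms(2) hG by auto
  then show ?thesis
  proof (elim disjE)
    assume "h = 0"
    then have "n = 0" using Z_to_P0 hz by simp
    then have "hom_equiv G (dipath 0)" using e Zg0 by simp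
    then show ?thesis by blast
  next
    assume h1: "h = 1"
    have "n \<noteq> 0"
    proof
      assume "n = 0"
      then have "hom_le (Zg n dir) (dipath 0)" using Zg0 le_refl by simp
      then show False using hz h1 by simp
    qed
    then have "hom_le (dipath 1) (Zg n dir)" using Zedge by simp
    then have "hom_equiv (Zg n dir) (dipath 1)" using hz h1 unfolding hom_equiv_def by simp
    then show ?thesis using equiv_trans[OF e] by blast
  next
    assume h2: "h = 2"
    then obtain f where "isH n dir f 2" using hz hom_dipath_iff by blast
    moreover have "\<not> hom_le (Zg n dir) (dipath 1)" using hz h2 by simp
    ultimately have "hom_le (dipath 2) (Zg n dir)" using Z2 by blast
    then have "hom_equiv (Zg n dir) (dipath 2)" using hz h2 unfolding hom_equiv_def by simp
    then show ?thesis using equiv_trans[OF e] by blast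
  next
    assume "h = 3"
    then show ?thesis using height3_class assms(1) hG by blast
  qed
qed



lemma Lpath_le_iff: "hom_le (Lpath k) (Lpath m) \<longleftrightarrow> m \<le> k"
  using le_cong[OF Lpath_LZ[of k] Lpath_LZ[of m]] LZ_le_iff by simp

theorem mainTheorem6:
  shows
   "(\<forall>k m. hom_le (Lpath k) (Lpath m) \<longleftrightarrow> k \<ge> m)
  \<and> (\<forall>k. oriented_path (Lpath k) \<and> height (Lpath k) = 3)
  \<and> (\<forall>G :: 'a digraph. oriented_path G \<and> height G = 3 \<longrightarrow> (\<exists>k. hom_equiv G (Lpath k)))
  \<and> (\<forall>G :: 'a digraph. oriented_path G \<and> height G \<le> 3 \<longrightarrow>
        hom_equiv G (dipath 0) \<or> hom_equiv G (dipath 1) \<or> hom_equiv G (dipath 2)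
        \<or> (\<exists>k. hom_equiv G (Lpath k)))
  \<and> hom_lt (dipath 0) (dipath 1) \<and> hom_lt (dipath 1) (dipath 2)
  \<and> (\<forall>k. hom_lt (dipath 2) (Lpath k))
  \<and> (\<forall>k. hom_lt (Lpath (Suc k)) (Lpath k))
  \<and> hom_equiv (Lpath 0) (dipath 3)
  \<and> (\<forall>G :: 'a digraph. oriented_path G \<longrightarrow>
        \<not> (hom_lt (dipath 0) G \<and> hom_lt G (dipath 1))
      \<and> \<not> (hom_lt (dipath 1) G \<and> hom_lt G (dipath 2)))"
proof (intro conjI allI impI)
  fix k m show "hom_le (Lpath k) (Lpath m) \<longleftrightarrow> k \<ge> m" using Lpath_le_iff by simp
next
  fix k show "oriented_path (Lpath k)" by (rule op_Lpath)
next
  fix k show "height (Lpath k) = 3" using height_equiv[OF Lpath_LZ[of k]] height_LZ by simp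
next
  fix G :: "'a digraph" assume "oriented_path G \<and> height G = 3"
  then show "\<exists>k. hom_equiv G (Lpath k)" using height3_class by blast
next
  fix G :: "'a digraph" assume "oriented_path G \<and> height G \<le> 3"
  then show "hom_equiv G (dipath 0) \<or> hom_equiv G (dipath 1) \<or> hom_equiv G (dipath 2)
        \<or> (\<exists>k. hom_equiv G (Lpath k))" using height_le3_class by blast
next
  show "hom_lt (dipath 0) (dipath 1)" unfolding hom_lt_def dipath_le_iff by simp
next
  show "hom_lt (dipath 1) (dipath 2)" unfolding hom_lt_def dipath_le_iff by simp
next
  fix k
  have a: "hom_le (dipath 2) (Lpath k) = hom_le (dipath 2) (LZ k)"
    using le_cong[OF equiv_refl Lpath_LZ[of k]] .
  have b: "hom_le (Lpath k) (dipath 2) = hom_le (LZ k) (dipath 2)"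
    using le_cong[OF Lpath_LZ[of k] equiv_refl] .
  show "hom_lt (dipath 2) (Lpath k)" unfolding hom_lt_def a b
    using dipath2_LZ LZ_dipath_ge by fastforce
next
  fix k show "hom_lt (Lpath (Suc k)) (Lpath k)" unfolding hom_lt_def Lpath_le_iff by simp
next
  show "hom_equiv (Lpath 0) (dipath 3)" using Lpath_LZ[of 0] LZ0 by simp
next
  fix G :: "'a digraph" assume op: "oriented_path G"
  obtain n dir where e: "hom_equiv G (Zg n dir)" using op_Z op by blast
  have c1: "\<And>B :: nat digraph. hom_le G B = hom_le (Zg n dir) B" using le_cong[OF e equiv_refl] by blast
  have c2: "\<And>B :: nat digraph. hom_le B G = hom_le B (Zg n dir)" using le_cong[OF equiv_refl e] by blast
  show "\<not> (hom_lt (dipath 0) G \<and> hom_lt G (dipath 1))"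
  proof
    assume a: "hom_lt (dipath 0) G \<and> hom_lt G (dipath 1)"
    then have "\<not> hom_le (dipath 1) (Zg n dir)" unfolding hom_lt_def c2 by blast
    then have "n = 0" using Zedge by (cases n) auto
    then have "hom_le (Zg n dir) (dipath 0)" using Zg0 le_refl by simp
    then show False using a unfolding hom_lt_def c1 by blast
  qed
  show "\<not> (hom_lt (dipath 1) G \<and> hom_lt G (dipath 2))"
  proof
    assume a: "hom_lt (dipath 1) G \<and> hom_lt G (dipath 2)"
    then have "hom_le (Zg n dir) (dipath 2)" "\<not> hom_le (Zg n dir) (dipath 1)" "\<not> hom_le (dipath 2) (Zg n dir)"
      unfolding hom_lt_def c1 c2 by auto
    then show False using Z2 hom_dipath_iff by blast
  qed
qed


end
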